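(* Let $G$ be a directed graph in which every vertex is reachable from a vertex $s$, let $t$ be a vertex of $G$, and let $k\ge 1$ be an integer. Assume that for no $\ell\in\{k,k+1,\dots,2k-1\}$ does $G$ contain an $(s,t)$-path of length exactly $dist_G(s,t)+\ell$, and assume that $G$ contains an $(s,t)$-path of length at least $dist_G(s,t)+k$. Let $P$ be such a path of minimum length. For $i\ge 0$ let $L_i$ be the set of vertices at distance exactly $i$ from $s$ in $G$. Let $p$ be the smallest integer $i\ge 1$ such that $L_i$ contains more than one vertex of $P$, and let $u$ and $v$ be, respectively, the first and second vertices of $P$ (in the order along $P$) lying in $L_p$. Then the subpath $P_{u,v}$ of $P$ from $u$ to $v$ has length larger than $k$.
   Context: Paths are simple directed paths; the length of a path is its number of edges. $dist_G(a,b)$ denotes the length of a shortest directed $(a,b)$-path in $G$. For a path $P$ and vertices $a,b$ on it (with $a$ before $b$), $P_{a,b}$ denotes the subpath of $P$ from $a$ to $b$. *)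

theory Defs
  imports Main
begin

definition is_dpath :: "'a set \<Rightarrow> ('a \<times> 'a) set \<Rightarrow> 'a list \<Rightarrow> 'a \<Rightarrow> 'a \<Rightarrow> bool" where
  "is_dpath V E xs a b \<longleftrightarrow> xs \<noteq> [] \<and> hd xs = a \<and> last xs = b \<and> distinct xs \<and>
     set xs \<subseteq> V \<and> (\<forall>i. Suc i < length xs \<longrightarrow> (xs ! i, xs ! Suc i) \<in> E)"

definition plen :: "'a list \<Rightarrow> nat" where
  "plen xs = length xs - 1"

definition gdist :: "'a set \<Rightarrow> ('a \<times> 'a) set \<Rightarrow> 'a \<Rightarrow> 'a \<Rightarrow> nat" where
  "gdist V E a b = (LEAST n. \<exists>xs. is_dpath V E xs a b \<and> plen xs = n)"

definition subpath :: "'a list \<Rightarrow> nat \<Rightarrow> nat \<Rightarrow> 'a list" where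
  "subpath P i j = drop i (take (Suc j) P)"

definition layer :: "'a set \<Rightarrow> ('a \<times> 'a) set \<Rightarrow> 'a \<Rightarrow> nat \<Rightarrow> 'a set" where
  "layer V E s i = {x \<in> V. gdist V E s x = i}"

definition first_rep_layer :: "'a set \<Rightarrow> ('a \<times> 'a) set \<Rightarrow> 'a \<Rightarrow> 'a list \<Rightarrow> nat" where
  "first_rep_layer V E s P = (LEAST i. i \<ge> 1 \<and> card (set P \<inter> layer V E s i) > 1)"

definition layer_positions :: "'a set \<Rightarrow> ('a \<times> 'a) set \<Rightarrow> 'a \<Rightarrow> 'a list \<Rightarrow> nat \<Rightarrow> nat list" where
  "layer_positions V E s P i = filter (\<lambda>j. P ! j \<in> layer V E s i) [0..<length P]"

end

theory Submission imports Defs begin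

lemma dpath_take:
  assumes "is_dpath V E xs a b" "i < length xs"
  shows "is_dpath V E (take (Suc i) xs) a (xs!i)"
proof -
  have "last (take (Suc i) xs) = xs ! i" using assms(2) by (simp add: take_Suc_conv_app_nth)
  then show ?thesis using assms unfolding is_dpath_def
    by (auto simp: hd_take dest: in_set_takeD)
qed

lemma dpath_drop:
  assumes "is_dpath V E xs a b" "i < length xs"
  shows "is_dpath V E (drop i xs) (xs!i) b"
  using assms unfolding is_dpath_def
  by (auto simp: hd_drop_conv_nth dest: in_set_dropD)

lemma gdist_le:
  assumes "is_dpath V E xs a b" shows "gdist V E a b \<le> plen xs"
  unfolding gdist_def using assms by (intro Least_le) auto

lemma gdist_ex:
  assumes "is_dpath V E xs a b" shows "\<exists>ys. is_dpath V E ys a b \<and> plen ys = gdist V E a b"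
proof -
  have "\<exists>n. \<exists>xs. is_dpath V E xs a b \<and> plen xs = n" using assms by auto
  from LeastI_ex[OF this] show ?thesis unfolding gdist_def by blast
qed

lemma gdist_0:
  assumes "is_dpath V E xs a b" "gdist V E a b = 0" shows "b = a"
proof -
  obtain ys where "is_dpath V E ys a b" "plen ys = 0" using gdist_ex[OF assms(1)] assms(2) by auto
  then show ?thesis unfolding is_dpath_def plen_def
    by (cases ys) auto
qed

lemma dpath_mem:
  assumes "is_dpath V E R a v" "x \<in> set R"
  shows "x = v \<or> gdist V E a x < plen R"
proof -
  obtain i where i: "i < length R" "x = R!i" using assms(2) by (auto simp: in_set_conv_nth)
  show ?thesis
  proof (cases "i = length R - 1")
    case True
    then have "x = last R" using i assms(1) by (auto simp: last_conv_nth is_dpath_def)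
    then show ?thesis using assms(1) by (simp add: is_dpath_def)
  next
    case False
    have "gdist V E a x \<le> i" using gdist_le[OF dpath_take[OF assms(1) i(1)]] i by (simp add: plen_def)
    then have "gdist V E a x < plen R" using False i unfolding plen_def by linarith
    then show ?thesis by simp
  qed
qed

lemma dpath_append:
  assumes R: "is_dpath V E R a v" and Q: "is_dpath V E Q v b"
    and disj: "set R \<inter> set (tl Q) = {}"
  shows "is_dpath V E (R @ tl Q) a b \<and> plen (R @ tl Q) = plen R + plen Q"
proof -
  have Rne: "R \<noteq> []" and Qne: "Q \<noteq> []" using R Q by (auto simp: is_dpath_def)
  have lR: "last R = v" "hd Q = v" using R Q by (auto simp: is_dpath_def)
  have edges: "(( R @ tl Q) ! i, (R @ tl Q) ! Suc i) \<in> E" if "Suc i < length (R @ tl Q)" for i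
  proof -
    consider "Suc i < length R" | "Suc i = length R" | "Suc i > length R" by linarith
    then show ?thesis
    proof cases
      case 1 then show ?thesis using R by (simp add: nth_append is_dpath_def)
    next
      case 2
      have "R ! i = v" using 2 lR Rne by (metis diff_Suc_1 last_conv_nth)
      moreover have "Q ! 0 = v" using lR Qne by (simp add: hd_conv_nth)
      moreover have "tl Q ! 0 = Q ! 1" using Qne that 2 by (simp add: nth_tl)
      moreover have "1 < length Q" using that 2 by simp
      ultimately show ?thesis using 2 Q by (auto simp: nth_append is_dpath_def)
    next
      case 3
      define j where "j = i - length R"
      have "(R @ tl Q) ! i = Q ! Suc j" "(R @ tl Q) ! Suc i = Q ! Suc (Suc j)"
        using 3 Qne that by (auto simp: nth_append nth_tl j_def Suc_diff_le)
      moreover have "Suc (Suc j) < length Q" using that 3 by (simp add: j_def)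
      ultimately show ?thesis using Q by (simp add: is_dpath_def)
    qed
  qed
  have "last (R @ tl Q) = b"
  proof (cases "tl Q = []")
    case True then have "Q = [v]" using Qne lR by (cases Q) auto
    then show ?thesis using Q lR by (simp add: is_dpath_def)
  next
    case False then show ?thesis using Q Qne by (cases Q) (auto simp: is_dpath_def)
  qed
  moreover have "distinct (R @ tl Q)" using R Q disj by (auto simp: is_dpath_def distinct_tl)
  moreover have "set (R @ tl Q) \<subseteq> V" using R Q by (auto simp: is_dpath_def dest: list.set_sel(2))
  moreover have "length R \<ge> 1" "length Q \<ge> 1" using Rne Qne by (cases R; simp; cases Q; simp)+
  ultimately show ?thesis using R Rne Qne edges by (auto simp: is_dpath_def plen_def)
qed


theorem lemma2:
  fixes V :: "'a set" and E :: "('a \<times> 'a) set" and s t :: 'a and k :: nat and P :: "'a list"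
  assumes "E \<subseteq> V \<times> V" and "s \<in> V" and "t \<in> V"
    and "\<forall>x\<in>V. \<exists>Q. is_dpath V E Q s x"
    and "k \<ge> 1"
    and "\<forall>l\<in>{k..2*k-1}. \<not> (\<exists>Q. is_dpath V E Q s t \<and> plen Q = gdist V E s t + l)"
    and "\<exists>Q. is_dpath V E Q s t \<and> plen Q \<ge> gdist V E s t + k"
    and "is_dpath V E P s t" and "plen P \<ge> gdist V E s t + k"
    and "\<forall>Q. is_dpath V E Q s t \<and> plen Q \<ge> gdist V E s t + k \<longrightarrow> plen P \<le> plen Q"
  defines "p \<equiv> first_rep_layer V E s P"
    and "idx \<equiv> layer_positions V E s P (first_rep_layer V E s P)"
  shows "plen (subpath P (idx ! 0) (idx ! 1)) > k"
proof -
  note PP = assms(8)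
  define m where "m = plen P"
  define d where "d = gdist V E s t"
  define D where "D = (\<lambda>i. gdist V E s (P ! i))"
  have Pne: "P \<noteq> []" and Pd: "distinct P" and PV: "set P \<subseteq> V" and hdP: "hd P = s" and lastP: "last P = t"
    using PP by (auto simp: is_dpath_def)
  have lenP: "length P = Suc m" using Pne by (cases P) (auto simp: m_def plen_def)
  have P0: "P ! 0 = s" using Pne hdP by (simp add: hd_conv_nth)
  have Pm: "P ! m = t" using Pne lastP lenP by (simp add: last_conv_nth)
  have mdk: "m \<ge> d + k" using assms(9) by (simp add: m_def d_def)
  have m2k: "m \<ge> d + 2*k"
  proof (rule ccontr)
    assume "\<not> ?thesis"
    then have "m - d \<in> {k..2*k-1}" using mdk by auto
    moreover have "plen P = gdist V E s t + (m - d)" using mdk by (simp add: m_def d_def)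
    ultimately show False using assms(6) PP by blast
  qed
  have Dle: "D i \<le> i" if "i < length P" for i
    using gdist_le[OF dpath_take[OF PP that]] that by (simp add: D_def plen_def)
  have inP: "P ! i \<in> set P" if "i < length P" for i using that by simp
  have Dm: "D m = d" using Pm by (simp add: D_def d_def)
  have D0: "i = 0" if "i < length P" "D i = 0" for i
  proof -
    have "P ! i = s" using gdist_0[OF dpath_take[OF PP that(1)]] that by (simp add: D_def)
    then show ?thesis using Pd that(1) P0 lenP by (metis nth_eq_iff_index_eq zero_less_Suc)
  qed
  have layer_iff: "P ! i \<in> layer V E s l \<longleftrightarrow> D i = l" if "i < length P" for i l
    using that PV by (auto simp: layer_def D_def)
  define j where "j = (LEAST j. j < length P \<and> D j < j)"
  have exj: "m < length P \<and> D m < m" using Dm mdk assms(5) lenP by auto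
  have j: "j < length P" "D j < j" using LeastI[of "\<lambda>j. j < length P \<and> D j < j", OF exj] by (auto simp: j_def)
  have Dbelow: "D i = i" if "i < j" for i
  proof -
    have "\<not> (i < length P \<and> D i < i)" using not_less_Least[OF that[unfolded j_def]] .
    then show ?thesis using Dle[of i] that j(1) by auto
  qed
  define q where "q = D j"
  have q1: "q \<ge> 1"
  proof (rule ccontr)
    assume "\<not> ?thesis" then have "D j = 0" by (simp add: q_def)
    then have "j = 0" using D0 j(1) by blast
    then show False using j(2) by simp
  qed
  have fin: "finite (set P \<inter> X)" for X by simp
  have card2: "card (set P \<inter> layer V E s l) > 1" if "a < length P" "b < length P" "a \<noteq> b"
      "D a = l" "D b = l" for a b l
  proof -
    have "P ! a \<noteq> P ! b" using Pd that by (simp add: nth_eq_iff_index_eq)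
    moreover have "{P ! a, P ! b} \<subseteq> set P \<inter> layer V E s l" using that layer_iff by auto
    ultimately have "card {P ! a, P ! b} \<le> card (set P \<inter> layer V E s l)"
      by (intro card_mono) auto
    then show ?thesis using \<open>P ! a \<noteq> P ! b\<close> by simp
  qed
  have qj: "q < j" using j by (simp add: q_def)
  have cq: "1 \<le> q \<and> card (set P \<inter> layer V E s q) > 1"
  proof -
    have "q < length P" using qj j(1) by simp
    moreover have "q \<noteq> j" using qj by simp
    moreover have "D j = q" by (simp add: q_def)
    ultimately show ?thesis using q1 card2[of q j q] j(1) Dbelow[OF qj] by blast
  qed
  have pq: "p \<le> q" unfolding p_def first_rep_layer_def by (rule Least_le) (rule cq)
  have pP: "1 \<le> p \<and> card (set P \<inter> layer V E s p) > 1"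
    unfolding p_def first_rep_layer_def by (rule LeastI[of _ q]) (rule cq)
  have pj: "p < j" using pq qj by simp
  have Dp: "D p = p" using Dbelow[OF pj] .
  have uniq: "c = D c" if "c < length P" "D c < p" for c
  proof (cases "D c = 0")
    case True then show ?thesis using D0 that by simp
  next
    case False
    define l where "l = D c"
    have "\<not> (1 \<le> l \<and> card (set P \<inter> layer V E s l) > 1)"
      using not_less_Least[of l "\<lambda>i. 1 \<le> i \<and> card (set P \<inter> layer V E s i) > 1"] that(2)
      unfolding p_def first_rep_layer_def l_def by blast
    moreover have "l < j" using that(2) pj l_def by simp
    moreover have "1 \<le> l" using False l_def by simp
    moreover have "D l = l" using Dbelow \<open>l < j\<close> by blast
    moreover have "l < length P" using \<open>l < j\<close> j(1) by simp
    ultimately show ?thesis using card2[of c l l] that(1) l_def by fastforce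
  qed
  have idxeq: "idx = filter (\<lambda>i. D i = p) [0..<length P]"
    unfolding idx_def layer_positions_def p_def[symmetric]
    by (rule filter_cong) (auto simp: layer_iff)
  have plt: "p < length P" using pj j(1) by simp
  have split: "[0..<length P] = [0..<p] @ p # [Suc p..<length P]"
  proof -
    have "[0..<length P] = [0..<p] @ [p..<length P]"
      using upt_add_eq_append[of 0 p "length P - p"] plt by (simp del: upt_Suc)
    moreover have "[p..<length P] = p # [Suc p..<length P]" using plt by (rule upt_conv_Cons)
    ultimately show ?thesis by (simp del: upt_Suc)
  qed
  have f0: "filter (\<lambda>i. D i = p) [0..<p] = []"
    using Dbelow pj by (auto simp: filter_empty_conv)
  define rest where "rest = filter (\<lambda>i. D i = p) [Suc p..<length P]"
  have idx2: "idx = p # rest" using idxeq split f0 Dp by (simp add: rest_def)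
  obtain x where x: "x \<in> set P \<inter> layer V E s p" "x \<noteq> P ! p"
  proof -
    have "P ! p \<in> set P \<inter> layer V E s p" using plt Dp layer_iff by auto
    moreover have "\<not> (set P \<inter> layer V E s p \<subseteq> {P ! p})"
    proof
      assume "set P \<inter> layer V E s p \<subseteq> {P ! p}"
      then have "card (set P \<inter> layer V E s p) \<le> card {P ! p}" by (intro card_mono) auto
      then show False using pP by simp
    qed
    ultimately show ?thesis using that by blast
  qed
  obtain c where c: "c < length P" "x = P ! c" using x(1) by (auto simp: in_set_conv_nth)
  have Dc: "D c = p" using x(1) c layer_iff by auto
  have "c \<noteq> p" using x c by auto
  moreover have "\<not> c < p" using Dbelow[of c] pj Dc by auto
  ultimately have "c \<in> set rest" using c Dc by (auto simp: rest_def)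
  then have rne: "rest \<noteq> []" by auto
  define b where "b = hd rest"
  have bset: "b \<in> set rest" using rne by (simp add: b_def)
  then have b: "p < b" "b < length P" "D b = p" by (auto simp: rest_def)
  have i0: "idx ! 0 = p" and i1: "idx ! 1 = b" using idx2 rne by (auto simp: b_def hd_conv_nth)
  have plsub: "plen (subpath P p b) = b - p" using b by (simp add: subpath_def plen_def)
  show ?thesis
  proof (rule ccontr)
    assume "\<not> ?thesis"
    then have bpk: "b - p \<le> k" using i0 i1 plsub by simp
    obtain R where R: "is_dpath V E R s (P ! b)" "plen R = p"
      using gdist_ex[OF dpath_take[OF PP b(2)]] b(3) by (auto simp: D_def)
    have Q: "is_dpath V E (drop b P) (P ! b) t" using dpath_drop[OF PP b(2)] .
    have disj: "set R \<inter> set (tl (drop b P)) = {}"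
    proof (rule ccontr)
      assume "\<not> ?thesis"
      then obtain y where y: "y \<in> set R" "y \<in> set (drop (Suc b) P)" by (auto simp: drop_Suc tl_drop)
      then obtain i where i: "i < length (drop (Suc b) P)" "drop (Suc b) P ! i = y"
        by (auto simp: in_set_conv_nth)
      define c' where "c' = Suc b + i"
      have c': "Suc b \<le> c'" "c' < length P" "y = P ! c'"
        using i by (auto simp: c'_def)
      show False
      proof (cases "y = P ! b")
        case True then show False using c' Pd b(2) by (simp add: nth_eq_iff_index_eq)
      next
        case False
        then have "D c' < p" using dpath_mem[OF R(1) y(1)] R(2) c' by (simp add: D_def)
        then have "c' = D c'" using uniq c'(2) by blast
        then show False using c'(1) b(1) \<open>D c' < p\<close> by simp
      qed
    qed
    have new: "is_dpath V E (R @ tl (drop b P)) s t" "plen (R @ tl (drop b P)) = p + (m - b)"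
      using dpath_append[OF R(1) Q disj] R(2) b(2) lenP by (auto simp: plen_def)
    have "plen (R @ tl (drop b P)) \<ge> gdist V E s t + k" using new(2) m2k bpk b(1) d_def by simp
    then have "m \<le> p + (m - b)" using assms(10) new m_def by metis
    then show False using b lenP by simp
  qed
qed

end
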